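(* Let $q$ be an odd positive integer, let $n\ge2$, and let $s_1,\dots,s_n$ be positive integers. Let $\xi_1,\dots,\xi_n$ be i.i.d. random variables, each uniformly distributed on $\{k/q: k\in\mathbb Z,\ |k|\le (q-1)/2\}$, and let $X:=s_1\xi_1+\dots+s_n\xi_n$. Then \[ \Big|\mathbb E\big[\langle X\rangle^2\big]-\Big(\mathbb E[X^2]+\frac1{12}\Big)\Big|\le\frac{1+\sum_{k=1}^n s_k^3+(\min_k s_k)^2}{6q^2}\le\frac{\sum_{k=1}^n s_k^3}{3q^2}. \]
   Context: $\langle x\rangle:=\lfloor x+\tfrac12\rfloor$ denotes $x$ rounded to the nearest integer, with ties broken upward. *)

theory Defs
  imports "HOL-Probability.Probability"
begin

definition nint :: "real \<Rightarrow> int" where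
  "nint x = \<lfloor>x + 1/2\<rfloor>"

definition unif_grid :: "nat \<Rightarrow> real pmf" where
  "unif_grid q = pmf_of_set {real_of_int k / real q | k. \<bar>k\<bar> \<le> (int q - 1) div 2}"

definition iid_grid :: "nat \<Rightarrow> nat \<Rightarrow> (nat \<Rightarrow> real) pmf" where
  "iid_grid q n = Pi_pmf {..<n} 0 (\<lambda>_. unif_grid q)"

end

theory Submission
  imports Defs
begin


definition hh :: "nat \<Rightarrow> int" where "hh M = (int M - 1) div 2"
definition II :: "nat \<Rightarrow> int set" where "II M = {-hh M..hh M}"
definition cc :: "nat \<Rightarrow> int \<Rightarrow> int" where "cc M x = (x + hh M) mod int M - hh M"

lemma hh_odd: "odd M \<Longrightarrow> int M = 2 * hh M + 1"
proof -
  assume "odd M" then obtain k where "M = 2*k+1" by (elim oddE)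
  then show ?thesis unfolding hh_def by simp
qed

lemma hh_nonneg: "odd M \<Longrightarrow> hh M \<ge> 0"
  using hh_odd[of M] by linarith

lemma card_II: "odd M \<Longrightarrow> card (II M) = M"
  unfolding II_def using hh_odd[of M] by simp

lemma finite_II[simp]: "finite (II M)" unfolding II_def by simp

lemma II_ne: "odd M \<Longrightarrow> II M \<noteq> {}" using hh_nonneg[of M] unfolding II_def by auto

lemma shift1:
  assumes "odd M" and per: "\<And>x. \<psi> (x + int M) = \<psi> x"
  shows "(\<Sum>i\<in>II M. \<psi> (i + 1)) = (\<Sum>i\<in>II M. (\<psi> i :: real))"
proof -
  let ?h = "hh M"
  have hM: "int M = 2 * ?h + 1" using hh_odd[OF assms(1)] .
  have h0: "?h \<ge> 0" using hh_nonneg[OF assms(1)] .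
  have "(\<Sum>i\<in>II M. \<psi> (i + 1)) = (\<Sum>i\<in>(\<lambda>i. i+1) ` II M. \<psi> i)"
    by (subst sum.reindex) (auto simp: inj_on_def)
  also have "(\<lambda>i. i+1) ` II M = {-?h+1..?h+1}" unfolding II_def
    by (simp add: image_add_atLeastAtMost' add.commute)
  also have "{-?h+1..?h+1} = insert (?h+1) {-?h+1..?h}" using h0 by auto
  also have "(\<Sum>i\<in>insert (?h+1) {-?h+1..?h}. \<psi> i) = \<psi> (?h+1) + (\<Sum>i\<in>{-?h+1..?h}. \<psi> i)"
    by (subst sum.insert) auto
  also have "\<psi> (?h+1) = \<psi> (-?h)" using per[of "-?h"] hM by (simp add: algebra_simps)
  also have "\<psi> (-?h) + (\<Sum>i\<in>{-?h+1..?h}. \<psi> i) = (\<Sum>i\<in>insert (-?h) {-?h+1..?h}. \<psi> i)"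
    by (subst sum.insert) auto
  also have "insert (-?h) {-?h+1..?h} = II M" unfolding II_def using h0 by auto
  finally show ?thesis .
qed

lemma shift:
  assumes "odd M" and per: "\<And>x. \<psi> (x + int M) = \<psi> x"
  shows "(\<Sum>i\<in>II M. \<psi> (i + c)) = (\<Sum>i\<in>II M. (\<psi> i :: real))"
proof (induction c rule: int_induct[where k=0])
  case base then show ?case by simp
next
  case (step1 i)
  have "(\<Sum>j\<in>II M. \<psi> (j + (i + 1))) = (\<Sum>j\<in>II M. (\<lambda>j. \<psi> (j + i)) (j + 1))"
    by (simp add: algebra_simps)
  also have "\<dots> = (\<Sum>j\<in>II M. \<psi> (j + i))"
    by (rule shift1[OF assms(1)]) (metis add.assoc add.commute per)
  finally show ?case using step1 by simp
next
  case (step2 i)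
  have "(\<Sum>j\<in>II M. \<psi> (j + i)) = (\<Sum>j\<in>II M. (\<lambda>j. \<psi> (j + (i - 1))) (j + 1))"
    by (simp add: algebra_simps)
  also have "\<dots> = (\<Sum>j\<in>II M. \<psi> (j + (i - 1)))"
    by (rule shift1[OF assms(1)]) (metis add.assoc add.commute per)
  finally show ?case using step2 by simp
qed

lemma per_int:
  assumes per: "\<And>x. \<phi> (x + int M) = \<phi> x"
  shows "\<phi> (x + k * int M) = \<phi> x"
proof (induction k arbitrary: x rule: int_induct[where k=0])
  case base then show ?case by simp
next
  case (step1 i)
  have "\<phi> (x + (i + 1) * int M) = \<phi> ((x + i * int M) + int M)" by (simp add: algebra_simps)
  then show ?case using step1 per by simp
next
  case (step2 i)
  have "\<phi> (x + i * int M) = \<phi> ((x + (i - 1) * int M) + int M)" by (simp add: algebra_simps)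
  then show ?case using step2 per by simp
qed

lemma EU:
  assumes "odd M" and per: "\<And>x. \<phi> (x + int M) = \<phi> x"
  shows "(\<Sum>x\<in>II M. \<Sum>i\<in>II M. \<phi> (y + int a * x + int b * i)) = real M * (\<Sum>i\<in>II M. (\<phi> (y + int (gcd a b) * i) :: real))"
proof (induction a b arbitrary: y rule: gcd_nat_induct)
  case (base m)
  then show ?case using card_II[OF assms(1)] by (simp add: sum_distrib_left)
next
  case (step m n)
  have key: "int m - int n * int (m div n) = int (m mod n)"
    by (metis add_diff_cancel_left' div_mult_mod_eq mult.commute of_nat_add of_nat_mult)
  have "(\<Sum>x\<in>II M. \<Sum>i\<in>II M. \<phi> (y + int m * x + int n * i))
      = (\<Sum>x\<in>II M. \<Sum>i\<in>II M. \<phi> (y + int (m mod n) * x + int n * i))"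
  proof (rule sum.cong[OF refl])
    fix x assume "x \<in> II M"
    have "(\<Sum>i\<in>II M. \<phi> (y + int m * x + int n * i))
        = (\<Sum>i\<in>II M. (\<lambda>i. \<phi> (y + int m * x + int n * i)) (i + (- int (m div n) * x)))"
      by (rule shift[OF assms(1), symmetric])
         (metis (no_types, lifting) per per_int[of \<phi> M] distrib_left add.assoc mult.commute)
    also have "\<dots> = (\<Sum>i\<in>II M. \<phi> (y + int (m mod n) * x + int n * i))"
    proof (rule sum.cong[OF refl])
      fix i
      have "y + int m * x + int n * (i + - int (m div n) * x) = y + (int m - int n * int (m div n)) * x + int n * i"
        by (simp add: algebra_simps)
      also have "\<dots> = y + int (m mod n) * x + int n * i" using key by simp
      finally show "\<phi> (y + int m * x + int n * (i + - int (m div n) * x)) = \<phi> (y + int (m mod n) * x + int n * i)"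
        by (rule arg_cong[where f=\<phi>])
    qed
    finally show "(\<Sum>i\<in>II M. \<phi> (y + int m * x + int n * i)) = (\<Sum>i\<in>II M. \<phi> (y + int (m mod n) * x + int n * i))" .
  qed
  also have "\<dots> = (\<Sum>i\<in>II M. \<Sum>x\<in>II M. \<phi> (y + int n * i + int (m mod n) * x))"
    by (subst sum.swap) (simp add: algebra_simps)
  also have "\<dots> = real M * (\<Sum>i\<in>II M. \<phi> (y + int (gcd n (m mod n)) * i))"
    by (rule step.IH)
  also have "gcd n (m mod n) = gcd m n" by (metis gcd_red_nat)
  finally show ?case .
qed




lemma cc_mem: assumes "odd M" shows "cc M x \<in> II M"
proof -
  have M: "int M = 2 * hh M + 1" using hh_odd[OF assms] .
  have pM: "int M > 0" using M hh_nonneg[OF assms] by linarith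
  have a: "0 \<le> (x + hh M) mod int M" "(x + hh M) mod int M < int M"
    using pos_mod_sign[OF pM] pos_mod_bound[OF pM] by auto
  show ?thesis unfolding cc_def II_def atLeastAtMost_iff using a M by linarith
qed

lemma cc_mod: "cc M x mod int M = x mod int M"
  unfolding cc_def by (simp add: mod_simps)

lemma cc_char: assumes "odd M" "y \<in> II M" "y mod int M = x mod int M" shows "cc M x = y"
proof -
  have M: "int M = 2 * hh M + 1" using hh_odd[OF assms(1)] .
  have "(x + hh M) mod int M = (y + hh M) mod int M" using assms(3) by (metis mod_add_left_eq)
  also have "\<dots> = y + hh M" using assms(2) M unfolding II_def by (intro mod_pos_pos_trivial) auto
  finally show ?thesis unfolding cc_def by simp
qed

lemma cc_id: "odd M \<Longrightarrow> y \<in> II M \<Longrightarrow> cc M y = y"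
  by (rule cc_char) auto

lemma cc_per: "cc M (x + k * int M) = cc M x"
  unfolding cc_def by (metis add.commute add.left_commute mod_mult_self1)

lemma cc_per1: "cc M (x + int M) = cc M x"
  using cc_per[of M x 1] by simp

lemma II_abs: "y \<in> II M \<longleftrightarrow> \<bar>y\<bar> \<le> hh M" unfolding II_def by auto

lemma block_img:
  assumes "odd d" "odd N"
  shows "(\<lambda>(t,b). t * int N + b) ` (II d \<times> II N) = II (d * N)"
    and "inj_on (\<lambda>(t,b). t * int N + b) (II d \<times> II N)"
proof -
  have od: "odd (d*N)" using assms by simp
  have D: "int d = 2 * hh d + 1" using hh_odd[OF assms(1)] .
  have NN: "int N = 2 * hh N + 1" using hh_odd[OF assms(2)] .
  have Q: "int (d*N) = 2 * hh (d*N) + 1" using hh_odd[OF od] .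
  have hd: "hh d \<ge> 0" and hN: "hh N \<ge> 0" using hh_nonneg assms by auto
  show "(\<lambda>(t,b). t * int N + b) ` (II d \<times> II N) = II (d * N)"
  proof
    show "(\<lambda>(t,b). t * int N + b) ` (II d \<times> II N) \<subseteq> II (d * N)"
    proof clarify
      fix t b assume t: "t \<in> II d" and b: "b \<in> II N"
      have "\<bar>t\<bar> * int N \<le> hh d * int N" using t NN unfolding II_abs by (intro mult_right_mono) auto
      moreover have "\<bar>t * int N + b\<bar> \<le> \<bar>t\<bar> * int N + \<bar>b\<bar>" by (simp add: abs_mult abs_triangle_ineq[THEN order_trans])
      moreover have "2 * (hh d * int N + hh N) + 1 = int (d*N)" using D NN by (simp add: algebra_simps)
      moreover have "\<bar>b\<bar> \<le> hh N" using b unfolding II_abs .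
      ultimately have "\<bar>t * int N + b\<bar> \<le> hh d * int N + hh N" by linarith
      moreover have "hh d * int N + hh N = hh (d*N)" using Q \<open>2 * (hh d * int N + hh N) + 1 = int (d*N)\<close>
        by (metis add_right_cancel mult_left_cancel zero_neq_numeral)
      ultimately show "t * int N + b \<in> II (d*N)" unfolding II_abs by simp
    qed
  next
    show "II (d * N) \<subseteq> (\<lambda>(t,b). t * int N + b) ` (II d \<times> II N)"
    proof
      fix x assume x: "x \<in> II (d*N)"
      define b where "b = cc N x"
      have b: "b \<in> II N" unfolding b_def by (rule cc_mem[OF assms(2)])
      have "int N dvd x - b" unfolding b_def using cc_mod[of N x] by (metis dvd_minus_iff minus_diff_eq mod_eq_dvd_iff)
      then obtain t where t: "x - b = int N * t" by (elim dvdE)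
      have "\<bar>t\<bar> * int N \<le> hh (d*N) + hh N" using t x b unfolding II_abs
        by (metis abs_mult abs_of_nat abs_triangle_ineq4 add_mono mult.commute order_trans)
      then have "2 * \<bar>t\<bar> * int N < (int d + 1) * int N" using D NN Q by (simp add: algebra_simps)
      then have "2 * \<bar>t\<bar> < int d + 1" using NN by (simp add: mult_less_cancel_right)
      then have "t \<in> II d" unfolding II_abs using D by linarith
      moreover have "x = t * int N + b" using t by (simp add: algebra_simps)
      ultimately show "x \<in> (\<lambda>(t,b). t * int N + b) ` (II d \<times> II N)" using b by force
    qed
  qed
  show "inj_on (\<lambda>(t,b). t * int N + b) (II d \<times> II N)"
  proof (rule inj_onI, clarify)
    fix t b t' b' assume h: "t \<in> II d" "b \<in> II N" "t' \<in> II d" "b' \<in> II N" "t * int N + b = t' * int N + b'"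
    have "b = cc N (t * int N + b)" using cc_per[of N b t] cc_id[OF assms(2) h(2)] by (simp add: add.commute)
    also have "\<dots> = cc N (t' * int N + b')" using h(5) by simp
    also have "\<dots> = b'" using cc_per[of N b' t'] cc_id[OF assms(2) h(4)] by (simp add: add.commute)
    finally have "b = b'" .
    moreover have "int N > 0" using assms(2) by (cases N) auto
    moreover have "t * int N = t' * int N" using h(5) \<open>b = b'\<close> by simp
    ultimately show "t = t' \<and> b = b'" by simp
  qed
qed

lemma block_sum:
  assumes "odd d" "odd N"
  shows "(\<Sum>x\<in>II (d*N). F x) = (\<Sum>t\<in>II d. \<Sum>b\<in>II N. (F (t * int N + b) :: real))"
proof -
  have "(\<Sum>x\<in>II (d*N). F x) = (\<Sum>x\<in>(\<lambda>(t,b). t * int N + b) ` (II d \<times> II N). F x)"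
    using block_img(1)[OF assms] by simp
  also have "\<dots> = (\<Sum>p\<in>II d \<times> II N. F ((\<lambda>(t,b). t * int N + b) p))"
    by (rule sum.reindex[OF block_img(2)[OF assms], unfolded comp_def])
  also have "\<dots> = (\<Sum>t\<in>II d. \<Sum>b\<in>II N. F (t * int N + b))"
    by (subst sum.cartesian_product) (simp add: case_prod_beta)
  finally show ?thesis .
qed

lemma sum_II_zero: "(\<Sum>t\<in>II d. real_of_int t) = 0"
proof -
  have "(\<Sum>t\<in>II d. real_of_int t) = (\<Sum>t\<in>uminus ` II d. real_of_int t)"
    unfolding II_def by (simp add: image_uminus_atLeastAtMost)
  also have "\<dots> = (\<Sum>t\<in>II d. - real_of_int t)" by (subst sum.reindex) (auto simp: inj_on_def)
  finally show ?thesis by (simp add: sum_negf)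
qed

lemma sq_sum_nat: "(\<Sum>i\<in>{- int h..int h}. real_of_int i ^ 2) = real h * (real h + 1) * (2 * real h + 1) / 3"
proof (induction h)
  case 0 then show ?case by simp
next
  case (Suc h)
  have e: "{- int (Suc h)..int (Suc h)} = insert (- int (Suc h)) (insert (int (Suc h)) {- int h..int h})" by auto
  show ?case unfolding e using Suc by (simp add: algebra_simps power2_eq_square)
qed

lemma sq_sum_II: assumes "odd N"
  shows "(\<Sum>i\<in>II N. real_of_int i ^ 2) = real N * (real N ^ 2 - 1) / 12"
proof -
  obtain h where h: "hh N = int h" using hh_nonneg[OF assms] by (metis nonneg_eq_int)
  have "int N = 2 * int h + 1" using hh_odd[OF assms] h by simp
  then have N: "real N = 2 * real h + 1" by (metis of_int_of_nat_eq of_int_add of_int_mult of_int_1 of_int_numeral of_int_of_nat_eq)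
  show ?thesis unfolding II_def h sq_sum_nat N by (simp add: algebra_simps power2_eq_square)
qed




lemma hh_mult: assumes "odd d" "odd N" shows "hh (d*N) = int d * hh N + hh d"
proof -
  have D: "int d = 2 * hh d + 1" using hh_odd[OF assms(1)] .
  have NN: "int N = 2 * hh N + 1" using hh_odd[OF assms(2)] .
  have Q: "int (d*N) = 2 * hh (d*N) + 1" by (rule hh_odd) (use assms in simp)
  have "2 * hh (d*N) + 1 = int d * int N" using Q by simp
  then have "2 * hh (d*N) + 1 = (2*hh d+1) * (2*hh N+1)" using D NN by simp
  then have "2 * hh (d*N) = 2 * ((2*hh d+1) * hh N + hh d)" by (simp add: algebra_simps)
  then show ?thesis using D by simp
qed

lemma per_block:
  assumes "odd d" "odd N" and per: "\<And>x. \<psi> (x + int N) = \<psi> x"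
  shows "(\<Sum>x\<in>II (d*N). \<psi> x) = real d * (\<Sum>b\<in>II N. (\<psi> b :: real))"
proof -
  have "(\<Sum>x\<in>II (d*N). \<psi> x) = (\<Sum>t\<in>II d. \<Sum>b\<in>II N. \<psi> (t * int N + b))" by (rule block_sum[OF assms(1,2)])
  also have "\<dots> = (\<Sum>t\<in>II d. \<Sum>b\<in>II N. \<psi> b)"
    using per_int[of \<psi> N, OF per] by (simp add: add.commute)
  also have "\<dots> = real d * (\<Sum>b\<in>II N. \<psi> b)" using card_II[OF assms(1)] by simp
  finally show ?thesis .
qed

lemma cc_scale: assumes "odd d" "odd N" shows "cc (d*N) (int d * i) = int d * cc N i"
proof (rule cc_char)
  show "odd (d*N)" using assms by simp
  have "\<bar>int d * cc N i\<bar> \<le> int d * hh N"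
    using cc_mem[OF assms(2), of i] unfolding II_abs by (simp add: abs_mult mult_left_mono)
  then show "int d * cc N i \<in> II (d*N)" unfolding II_abs hh_mult[OF assms] using hh_nonneg[OF assms(1)] by linarith
  have "int N dvd cc N i - i" using cc_mod[of N i] by (metis mod_eq_dvd_iff)
  then have "int d * int N dvd int d * (cc N i - i)" by (rule mult_dvd_mono[OF dvd_refl])
  then have "int (d * N) dvd int d * cc N i - int d * i" by (simp only: of_nat_mult right_diff_distrib)
  then show "int d * cc N i mod int (d * N) = int d * i mod int (d * N)" unfolding mod_eq_dvd_iff .
qed

lemma sq_formula:
  assumes "odd q" "d dvd q"
  shows "(\<Sum>i\<in>II q. real_of_int (cc q (int d * i)) ^ 2) = real q * (real q ^ 2 - real d ^ 2) / 12"
proof -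
  obtain N where qN: "q = d * N" using assms(2) by (elim dvdE)
  have od: "odd d" "odd N" using assms(1) qN by auto
  have "(\<Sum>i\<in>II q. real_of_int (cc q (int d * i)) ^ 2) = (\<Sum>i\<in>II (d*N). real d ^ 2 * real_of_int (cc N i) ^ 2)"
    unfolding qN cc_scale[OF od] by (simp add: power_mult_distrib)
  also have "\<dots> = real d ^ 2 * (\<Sum>i\<in>II (d*N). real_of_int (cc N i) ^ 2)" by (simp add: sum_distrib_left)
  also have "(\<Sum>i\<in>II (d*N). real_of_int (cc N i) ^ 2) = real d * (\<Sum>i\<in>II N. real_of_int (cc N i) ^ 2)"
    by (rule per_block[OF od]) (simp add: cc_per1)
  also have "(\<Sum>i\<in>II N. real_of_int (cc N i) ^ 2) = (\<Sum>i\<in>II N. real_of_int i ^ 2)"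
    using cc_id[OF od(2)] by simp
  also have "\<dots> = real N * (real N ^ 2 - 1) / 12" by (rule sq_sum_II[OF od(2)])
  finally show ?thesis unfolding qN by (simp add: algebra_simps power2_eq_square)
qed

lemma EU1:
  assumes "odd M" and per: "\<And>x. \<phi> (x + int M) = \<phi> x"
  shows "(\<Sum>x\<in>II M. \<phi> (y + int a * x)) = (\<Sum>x\<in>II M. (\<phi> (y + int (gcd a M) * x) :: real))"
proof -
  have "real M * (\<Sum>x\<in>II M. \<phi> (y + int a * x)) = (\<Sum>x\<in>II M. \<Sum>i\<in>II M. \<phi> (y + int a * x + int M * i))"
    using per_int[of \<phi> M, OF per] card_II[OF assms(1)] by (simp add: mult.commute sum_distrib_left)
  also have "\<dots> = real M * (\<Sum>x\<in>II M. \<phi> (y + int (gcd a M) * x))" by (rule EU[where \<phi>=\<phi>, OF assms])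
  finally show ?thesis using assms(1) by (cases M) auto
qed




lemma cc_lin_per: "q = g * N \<Longrightarrow> cc q (c + int g * (x + int N)) = cc q (c + int g * x)"
proof -
  assume qN: "q = g * N"
  have e: "c + int g * (x + int N) = (c + int g * x) + int q" using qN by (simp add: algebra_simps)
  show ?thesis unfolding e by (rule cc_per1)
qed

lemma coset:
  assumes "odd q" "g dvd q"
  shows "(\<Sum>i\<in>II q. real_of_int (cc q (z + int g * i))) = real q * real_of_int (cc g z)"
proof -
  obtain N where qN: "q = g * N" using assms(2) by (elim dvdE)
  have od: "odd g" "odd N" using assms(1) qN by auto
  define c where "c = cc g z"
  have "int g dvd z - c" unfolding c_def using cc_mod[of g z] by (metis dvd_minus_iff minus_diff_eq mod_eq_dvd_iff)
  then obtain w where "z - c = int g * w" by (elim dvdE)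
  then have w: "z = c + int g * w" by simp
  have per: "\<And>x. real_of_int (cc q (z + int g * (x + int N))) = real_of_int (cc q (z + int g * x))"
    using cc_lin_per[OF qN] by simp
  have "(\<Sum>i\<in>II q. real_of_int (cc q (z + int g * i))) = real g * (\<Sum>i\<in>II N. real_of_int (cc q (z + int g * i)))"
    unfolding qN by (rule per_block[OF od]) (use cc_lin_per[of "g*N" g N] in simp)
  also have "(\<Sum>i\<in>II N. real_of_int (cc q (z + int g * i))) = (\<Sum>i\<in>II N. (\<lambda>i. real_of_int (cc q (c + int g * i))) (i + w))"
    using w by (simp add: algebra_simps)
  also have "\<dots> = (\<Sum>i\<in>II N. real_of_int (cc q (c + int g * i)))"
    by (rule shift[OF od(2)]) (use cc_lin_per[OF qN] in simp)
  also have "\<dots> = (\<Sum>i\<in>II N. real_of_int (c + int g * i))"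
  proof (rule sum.cong[OF refl])
    fix i assume i: "i \<in> II N"
    have a1: "\<bar>int g * i\<bar> \<le> int g * hh N" using i unfolding II_abs by (simp add: abs_mult mult_left_mono)
    have a2: "\<bar>c\<bar> \<le> hh g" using cc_mem[OF od(1), of z] unfolding II_abs c_def .
    have "\<bar>c + int g * i\<bar> \<le> hh g + int g * hh N" using a1 a2 abs_triangle_ineq[of c "int g * i"] by linarith
    then have "c + int g * i \<in> II q" unfolding qN II_abs hh_mult[OF od] by linarith
    then show "real_of_int (cc q (c + int g * i)) = real_of_int (c + int g * i)" using cc_id[OF assms(1)] by simp
  qed
  also have "\<dots> = real N * c + real g * (\<Sum>i\<in>II N. real_of_int i)"
    using card_II[OF od(2)] by (simp add: sum.distrib sum_distrib_left)
  also have "\<dots> = real N * c" using sum_II_zero by simp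
  finally show ?thesis unfolding c_def qN by simp
qed

lemma amgm2: fixes a b :: real shows "\<bar>a*b\<bar> \<le> (a^2+b^2)/2"
proof -
  have "0 \<le> (\<bar>a\<bar> - \<bar>b\<bar>)^2" by simp
  then have "2*(\<bar>a\<bar>*\<bar>b\<bar>) \<le> \<bar>a\<bar>^2 + \<bar>b\<bar>^2" by (simp add: power2_eq_square algebra_simps)
  then show ?thesis by (simp add: abs_mult)
qed

lemma Bbound:
  assumes "odd g"
  shows "\<bar>\<Sum>b\<in>II g. real_of_int b * real_of_int (cc g (int s * b))\<bar> \<le> real g * (real g ^ 2 - 1) / 12"
proof -
  have g0: "g > 0" using assms by (cases g) auto
  have "(\<Sum>b\<in>II g. real_of_int (cc g (int s * b)) ^ 2) = (\<Sum>b\<in>II g. real_of_int (cc g (0 + int s * b)) ^ 2)" by simp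
  also have "\<dots> = (\<Sum>b\<in>II g. real_of_int (cc g (0 + int (gcd s g) * b)) ^ 2)"
    by (rule EU1[OF assms]) (simp add: cc_per1)
  also have "\<dots> = real g * (real g ^ 2 - real (gcd s g) ^ 2) / 12" using sq_formula[OF assms, of "gcd s g"] by simp
  also have "\<dots> \<le> real g * (real g ^ 2 - 1) / 12"
  proof -
    have "gcd s g \<ge> 1" using g0 by (simp add: Suc_le_eq)
    then have "real (gcd s g) ^ 2 \<ge> 1" by simp
    then show ?thesis using g0 by (intro divide_right_mono mult_left_mono) auto
  qed
  finally have C2: "(\<Sum>b\<in>II g. real_of_int (cc g (int s * b)) ^ 2) \<le> real g * (real g ^ 2 - 1) / 12" .
  have "\<bar>\<Sum>b\<in>II g. real_of_int b * real_of_int (cc g (int s * b))\<bar> \<le> (\<Sum>b\<in>II g. \<bar>real_of_int b * real_of_int (cc g (int s * b))\<bar>)"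
    by (rule sum_abs)
  also have "\<dots> \<le> (\<Sum>b\<in>II g. (real_of_int b ^ 2 + real_of_int (cc g (int s * b)) ^ 2) / 2)"
  proof (rule sum_mono)
    fix b
    show "\<bar>real_of_int b * real_of_int (cc g (int s * b))\<bar> \<le> (real_of_int b ^ 2 + real_of_int (cc g (int s * b)) ^ 2) / 2"
      by (rule amgm2)
  qed
  also have "\<dots> = ((\<Sum>b\<in>II g. real_of_int b ^ 2) + (\<Sum>b\<in>II g. real_of_int (cc g (int s * b)) ^ 2)) / 2"
    by (simp only: sum_divide_distrib[symmetric] sum.distrib)
  also have "\<dots> \<le> real g * (real g ^ 2 - 1) / 12" using C2 sq_sum_II[OF assms] by simp
  finally show ?thesis .
qed




definition PP :: "nat \<Rightarrow> nat set \<Rightarrow> (nat \<Rightarrow> int) pmf" where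
  "PP q A = Pi_pmf A 0 (\<lambda>_. pmf_of_set (II q))"

lemma set_PP_finite: assumes "finite A" "odd q" shows "finite (set_pmf (PP q A))"
  unfolding PP_def using assms II_ne[OF assms(2)] by (subst set_Pi_pmf) (auto intro!: finite_PiE_dflt)

lemma STEP:
  assumes "finite A" "a \<notin> A" "odd q"
  shows "measure_pmf.expectation (PP q (insert a A)) (F :: _ \<Rightarrow> real)
        = (\<Sum>x\<in>II q. measure_pmf.expectation (PP q A) (\<lambda>f. F (f(a:=x)))) / real q"
proof -
  have e: "PP q (insert a A) = pmf_of_set (II q) \<bind> (\<lambda>y. map_pmf (\<lambda>f. f(a:=y)) (PP q A))"
    unfolding PP_def using assms by (subst Pi_pmf_insert') (simp_all add: map_pmf_def)
  show ?thesis unfolding e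
    using assms II_ne[OF assms(3)] set_PP_finite[OF assms(1,3)] card_II[OF assms(3)]
    by (subst pmf_expectation_bind_pmf_of_set) (auto simp: sum_divide_distrib divide_inverse mult.commute sum_distrib_left)
qed

lemma LA:
  assumes "finite A" "odd q" and per: "\<And>x. \<phi> (x + int q) = \<phi> x"
  shows "measure_pmf.expectation (PP q A) (\<lambda>f. \<phi> (y + (\<Sum>k\<in>A. int (s k) * f k)))
         = (\<Sum>i\<in>II q. (\<phi> (y + int (Gcd (s ` A)) * i) :: real)) / real q"
  using assms(1)
proof (induction A arbitrary: y rule: finite_induct)
  case empty
  have "PP q {} = return_pmf (\<lambda>_. 0)" unfolding PP_def by simp
  then show ?case using card_II[OF assms(2)] assms(2) by (cases q) auto
next
  case (insert a A)
  have "measure_pmf.expectation (PP q (insert a A)) (\<lambda>f. \<phi> (y + (\<Sum>k\<in>insert a A. int (s k) * f k)))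
      = (\<Sum>x\<in>II q. measure_pmf.expectation (PP q A) (\<lambda>f. \<phi> (y + (\<Sum>k\<in>insert a A. int (s k) * (f(a:=x)) k)))) / real q"
    by (rule STEP[OF insert(1,2) assms(2)])
  also have "\<dots> = (\<Sum>x\<in>II q. measure_pmf.expectation (PP q A) (\<lambda>f. \<phi> ((y + int (s a) * x) + (\<Sum>k\<in>A. int (s k) * f k)))) / real q"
  proof -
    have "\<And>f x. (\<Sum>k\<in>insert a A. int (s k) * (f(a:=x)) k) = int (s a) * x + (\<Sum>k\<in>A. int (s k) * f k)"
      using insert(1,2) by (subst sum.insert) (auto intro!: sum.cong)
    then show ?thesis by (simp add: add.assoc)
  qed
  also have "\<dots> = (\<Sum>x\<in>II q. (\<Sum>i\<in>II q. \<phi> (y + int (s a) * x + int (Gcd (s ` A)) * i)) / real q) / real q"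
    using insert(3) by simp
  also have "\<dots> = (\<Sum>x\<in>II q. \<Sum>i\<in>II q. \<phi> (y + int (s a) * x + int (Gcd (s ` A)) * i)) / real q / real q"
    by (simp add: sum_divide_distrib)
  also have "\<dots> = real q * (\<Sum>i\<in>II q. \<phi> (y + int (gcd (s a) (Gcd (s ` A))) * i)) / real q / real q"
    by (subst EU[where \<phi>=\<phi>, OF assms(2) per]) simp
  also have "\<dots> = (\<Sum>i\<in>II q. \<phi> (y + int (Gcd (s ` insert a A)) * i)) / real q"
    using assms(2) by (cases q) auto
  finally show ?case .
qed




lemma Dval:
  assumes "odd q" "finite A"
  shows "measure_pmf.expectation (PP q A) (\<lambda>f. real_of_int (cc q (\<Sum>k\<in>A. int (s k) * f k)) ^ 2)
       = (real q ^ 2 - real (gcd (Gcd (s ` A)) q) ^ 2) / 12"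
proof -
  let ?\<phi> = "\<lambda>x. real_of_int (cc q x) ^ 2"
  have per: "\<And>x. ?\<phi> (x + int q) = ?\<phi> x" by (simp add: cc_per1)
  have "measure_pmf.expectation (PP q A) (\<lambda>f. ?\<phi> (0 + (\<Sum>k\<in>A. int (s k) * f k)))
      = (\<Sum>i\<in>II q. ?\<phi> (0 + int (Gcd (s ` A)) * i)) / real q"
    by (rule LA[where \<phi>="?\<phi>", OF assms(2,1) per])
  also have "(\<Sum>i\<in>II q. ?\<phi> (0 + int (Gcd (s ` A)) * i)) = (\<Sum>i\<in>II q. ?\<phi> (0 + int (gcd (Gcd (s ` A)) q) * i))"
    by (rule EU1[where \<phi>="?\<phi>", OF assms(1) per])
  also have "\<dots> = real q * (real q ^ 2 - real (gcd (Gcd (s ` A)) q) ^ 2) / 12"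
    using sq_formula[OF assms(1), of "gcd (Gcd (s ` A)) q"] by simp
  finally have "measure_pmf.expectation (PP q A) (\<lambda>f. ?\<phi> (0 + (\<Sum>k\<in>A. int (s k) * f k)))
     = real q * (real q ^ 2 - real (gcd (Gcd (s ` A)) q) ^ 2) / 12 / real q" .
  moreover have "real q \<noteq> 0" using assms(1) by (cases q) auto
  ultimately show ?thesis by simp
qed

lemma Tval:
  assumes "odd q" "finite A" "k \<notin> A"
  shows "measure_pmf.expectation (PP q (insert k A))
           (\<lambda>f. real_of_int (f k) * real_of_int (cc q (\<Sum>l\<in>insert k A. int (s l) * f l)))
       = (\<Sum>x\<in>II q. real_of_int x * real_of_int (cc (gcd (Gcd (s ` A)) q) (int (s k) * x))) / real q"
proof -
  let ?g = "gcd (Gcd (s ` A)) q"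
  let ?c = "\<lambda>x. real_of_int (cc q x)"
  have per: "\<And>x. ?c (x + int q) = ?c x" by (simp add: cc_per1)
  have "measure_pmf.expectation (PP q (insert k A))
           (\<lambda>f. real_of_int (f k) * ?c (\<Sum>l\<in>insert k A. int (s l) * f l))
       = (\<Sum>x\<in>II q. measure_pmf.expectation (PP q A) (\<lambda>f. real_of_int ((f(k:=x)) k) * ?c (\<Sum>l\<in>insert k A. int (s l) * (f(k:=x)) l))) / real q"
    by (rule STEP[OF assms(2,3,1)])
  also have "\<dots> = (\<Sum>x\<in>II q. real_of_int x * real_of_int (cc ?g (int (s k) * x))) / real q"
  proof (rule arg_cong[where f="\<lambda>t. t / real q"], rule sum.cong[OF refl])
    fix x assume x: "x \<in> II q"
    have "\<And>f. (\<Sum>l\<in>insert k A. int (s l) * (f(k:=x)) l) = int (s k) * x + (\<Sum>l\<in>A. int (s l) * f l)"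
      using assms(2,3) by (subst sum.insert) (auto intro!: sum.cong)
    then have "measure_pmf.expectation (PP q A) (\<lambda>f. real_of_int ((f(k:=x)) k) * ?c (\<Sum>l\<in>insert k A. int (s l) * (f(k:=x)) l))
        = real_of_int x * measure_pmf.expectation (PP q A) (\<lambda>f. ?c (int (s k) * x + (\<Sum>l\<in>A. int (s l) * f l)))"
      by simp
    also have "measure_pmf.expectation (PP q A) (\<lambda>f. ?c (int (s k) * x + (\<Sum>l\<in>A. int (s l) * f l)))
        = (\<Sum>i\<in>II q. ?c (int (s k) * x + int (Gcd (s ` A)) * i)) / real q"
      by (rule LA[where \<phi>="?c", OF assms(2,1) per])
    also have "(\<Sum>i\<in>II q. ?c (int (s k) * x + int (Gcd (s ` A)) * i)) = (\<Sum>i\<in>II q. ?c (int (s k) * x + int ?g * i))"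
      by (rule EU1[where \<phi>="?c", OF assms(1) per])
    also have "\<dots> = real q * real_of_int (cc ?g (int (s k) * x))"
      by (rule coset[OF assms(1)]) simp
    finally show "measure_pmf.expectation (PP q A) (\<lambda>f. real_of_int ((f(k:=x)) k) * ?c (\<Sum>l\<in>insert k A. int (s l) * (f(k:=x)) l))
        = real_of_int x * real_of_int (cc ?g (int (s k) * x))" using assms(1) by (cases q) auto
  qed
  finally show ?thesis .
qed

lemma Tbound:
  assumes "odd q" "g dvd q"
  shows "\<bar>\<Sum>x\<in>II q. real_of_int x * real_of_int (cc g (int s * x))\<bar> \<le> real q * (real g ^ 2 - 1) / 12"
proof -
  obtain N where qN: "q = N * g" using assms(2) by (metis dvdE mult.commute)
  have od: "odd N" "odd g" using assms(1) qN by auto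
  let ?c = "\<lambda>b. real_of_int (cc g (int s * b))"
  have "(\<Sum>x\<in>II q. real_of_int x * ?c x) = (\<Sum>t\<in>II N. \<Sum>b\<in>II g. real_of_int (t * int g + b) * ?c (t * int g + b))"
    unfolding qN by (rule block_sum[OF od])
  also have "\<dots> = (\<Sum>t\<in>II N. \<Sum>b\<in>II g. (real_of_int t * real g) * ?c b + real_of_int b * ?c b)"
  proof (intro sum.cong refl)
    fix t b
    have "int s * (t * int g + b) = int s * b + (int s * t) * int g" by (simp add: algebra_simps)
    then have "?c (t * int g + b) = ?c b" by (simp add: cc_per)
    then show "real_of_int (t * int g + b) * ?c (t * int g + b) = (real_of_int t * real g) * ?c b + real_of_int b * ?c b"
      by (simp add: algebra_simps)
  qed
  also have "\<dots> = (\<Sum>t\<in>II N. (real_of_int t * real g) * (\<Sum>b\<in>II g. ?c b) + (\<Sum>b\<in>II g. real_of_int b * ?c b))"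
    by (simp add: sum.distrib sum_distrib_left)
  also have "\<dots> = (\<Sum>t\<in>II N. real_of_int t) * (real g * (\<Sum>b\<in>II g. ?c b)) + real N * (\<Sum>b\<in>II g. real_of_int b * ?c b)"
    using card_II[OF od(1)] by (simp add: sum.distrib sum_distrib_right mult.assoc)
  also have "\<dots> = real N * (\<Sum>b\<in>II g. real_of_int b * ?c b)" using sum_II_zero by simp
  finally have e: "(\<Sum>x\<in>II q. real_of_int x * ?c x) = real N * (\<Sum>b\<in>II g. real_of_int b * ?c b)" .
  have "\<bar>real N * (\<Sum>b\<in>II g. real_of_int b * ?c b)\<bar> \<le> real N * (real g * (real g ^ 2 - 1) / 12)"
  proof -
    have b: "\<bar>\<Sum>b\<in>II g. real_of_int b * ?c b\<bar> \<le> real g * (real g ^ 2 - 1) / 12" by (rule Bbound[OF od(2)])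
    have "\<bar>real N * (\<Sum>b\<in>II g. real_of_int b * ?c b)\<bar> = real N * \<bar>\<Sum>b\<in>II g. real_of_int b * ?c b\<bar>" by (simp add: abs_mult)
    also have "\<dots> \<le> real N * (real g * (real g ^ 2 - 1) / 12)" by (rule mult_left_mono[OF b]) simp
    finally show ?thesis .
  qed
  then have f: "\<bar>\<Sum>x\<in>II q. real_of_int x * ?c x\<bar> \<le> real N * (real g * (real g ^ 2 - 1) / 12)"
    unfolding e .
  show ?thesis using f unfolding qN by (simp add: algebra_simps)
qed




lemma unif_grid_eq: assumes "odd q"
  shows "unif_grid q = map_pmf (\<lambda>j. real_of_int j / real q) (pmf_of_set (II q))"
proof -
  have q0: "real q > 0" using assms by (cases q) auto
  have e1: "{k. \<bar>k\<bar> \<le> (int q - 1) div 2} = II q" by (auto simp: II_abs hh_def)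
  have "{real_of_int k / real q | k. \<bar>k\<bar> \<le> (int q - 1) div 2} = (\<lambda>j. real_of_int j / real q) ` {k. \<bar>k\<bar> \<le> (int q - 1) div 2}"
    by blast
  then have "{real_of_int k / real q | k. \<bar>k\<bar> \<le> (int q - 1) div 2} = (\<lambda>j. real_of_int j / real q) ` II q"
    unfolding e1 .
  moreover have "inj_on (\<lambda>j. real_of_int j / real q) (II q)" using q0 by (auto simp: inj_on_def)
  ultimately show ?thesis unfolding unif_grid_def using II_ne[OF assms]
    by (simp add: map_pmf_of_set_inj)
qed

lemma iid_eq: assumes "odd q"
  shows "iid_grid q n = map_pmf (\<lambda>f. (\<lambda>j. real_of_int j / real q) \<circ> f) (PP q {..<n})"
  unfolding iid_grid_def PP_def unif_grid_eq[OF assms] by (rule Pi_pmf_map) auto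

lemma nint_eq: assumes "odd q"
  shows "real_of_int (nint (real_of_int K / real q)) = (real_of_int K - real_of_int (cc q K)) / real q"
proof -
  let ?h = "hh q"
  have Q: "int q = 2 * ?h + 1" using hh_odd[OF assms] .
  have q0: "real q > 0" using assms by (cases q) auto
  have Qr: "real q = 2 * real_of_int ?h + 1"
  proof -
    have "real_of_int (int q) = real_of_int (2 * ?h + 1)" using Q by simp
    then show ?thesis by simp
  qed
  have "real_of_int K / real q + 1/2 = (2 * real_of_int K + real q) / (2 * real q)"
    using q0 by (simp add: field_simps)
  also have "2 * real_of_int K + real q = real_of_int (2 * (K + ?h) + 1)" using Qr by simp
  also have "2 * real q = real_of_int (2 * int q)" by simp
  finally have "real_of_int K / real q + 1/2 = real_of_int (2 * (K + ?h) + 1) / real_of_int (2 * int q)" .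
  then have "nint (real_of_int K / real q) = (2 * (K + ?h) + 1) div (2 * int q)"
    by (simp only: nint_def floor_divide_of_int_eq)
  also have "\<dots> = ((2 * (K + ?h) + 1) div 2) div int q" by (simp add: zdiv_zmult2_eq)
  also have "(2 * (K + ?h) + 1) div 2 = K + ?h" by simp
  finally have n: "nint (real_of_int K / real q) = (K + ?h) div int q" .
  have "K + ?h = int q * ((K + ?h) div int q) + (K + ?h) mod int q" by simp
  then have "int q * ((K + ?h) div int q) = K - cc q K" unfolding cc_def by linarith
  then have "real q * real_of_int ((K + ?h) div int q) = real_of_int K - real_of_int (cc q K)"
    by (metis of_int_diff of_int_mult of_int_of_nat_eq)
  then show ?thesis unfolding n using q0 by (simp add: field_simps)
qed




lemma amgm3: fixes s g :: real assumes "0 \<le> s" "0 \<le> g"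
  shows "s * g^2 / 6 \<le> s^3/18 + g^3/9"
proof -
  have "0 \<le> (s-g)^2 * (s + 2*g)" using assms by simp
  moreover have "(s-g)^2*(s+2*g) = s^3 - 3*(s*g^2) + 2*g^3" by (simp add: power2_eq_square power3_eq_cube algebra_simps)
  ultimately show ?thesis by linarith
qed

lemma lin_aux: fixes a S m2 d2 :: real
  shows "d2 \<le> m2 \<Longrightarrow> 0 \<le> m2 \<Longrightarrow> 2*a \<le> S/6 \<Longrightarrow> d2/12 + 2*a \<le> (1+S+m2)/6"
  by argo

lemma final_bound:
  fixes d m :: real and s g t :: "nat \<Rightarrow> real"
  assumes "0 \<le> d" "d \<le> m" "\<And>k. k<n \<Longrightarrow> 0 \<le> s k" "\<And>k. k<n \<Longrightarrow> 0 \<le> g k"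
    "\<And>k. k<n \<Longrightarrow> \<bar>t k\<bar> \<le> g k^2/12" "(\<Sum>k<n. g k^3) \<le> (\<Sum>k<n. s k^3)"
  shows "\<bar>0 - d^2/12 - 2*(\<Sum>k<n. s k * t k)\<bar> \<le> (1 + (\<Sum>k<n. s k^3) + m^2)/6"
proof -
  have "\<bar>\<Sum>k<n. s k * t k\<bar> \<le> (\<Sum>k<n. \<bar>s k * t k\<bar>)" by (rule sum_abs)
  also have "\<dots> \<le> (\<Sum>k<n. s k * (g k^2/12))"
  proof (rule sum_mono)
    fix k assume "k \<in> {..<n}" then have k: "k < n" by simp
    have "\<bar>s k * t k\<bar> = s k * \<bar>t k\<bar>" using assms(3)[OF k] by (simp add: abs_mult)
    also have "\<dots> \<le> s k * (g k^2/12)" by (rule mult_left_mono[OF assms(5)[OF k] assms(3)[OF k]])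
    finally show "\<bar>s k * t k\<bar> \<le> s k * (g k^2/12)" .
  qed
  finally have a0: "\<bar>\<Sum>k<n. s k * t k\<bar> \<le> (\<Sum>k<n. s k * (g k^2/12))" .
  have "(\<Sum>k<n. s k * g k^2/6) = 2 * (\<Sum>k<n. s k * (g k^2/12))" by (simp add: sum_distrib_left)
  then have a: "2 * \<bar>\<Sum>k<n. s k * t k\<bar> \<le> (\<Sum>k<n. s k * g k^2/6)" using a0 by linarith
  have "(\<Sum>k<n. s k * g k^2/6) \<le> (\<Sum>k<n. s k^3/18 + g k^3/9)"
    using assms(3,4) by (intro sum_mono amgm3) auto
  also have "\<dots> = (\<Sum>k<n. s k^3)/18 + (\<Sum>k<n. g k^3)/9" by (simp add: sum.distrib sum_divide_distrib)
  finally have b: "2 * \<bar>\<Sum>k<n. s k * t k\<bar> \<le> (\<Sum>k<n. s k^3)/6" using a assms(6) by linarith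
  have "d^2 \<le> m^2" using assms(1,2) by (intro power_mono) auto
  moreover have "0 \<le> m^2" by simp
  ultimately have c: "d^2/12 + 2 * \<bar>\<Sum>k<n. s k * t k\<bar> \<le> (1 + (\<Sum>k<n. s k^3) + m^2)/6" using b by (rule lin_aux)
  have "\<bar>0 - d^2/12 - 2*(\<Sum>k<n. s k * t k)\<bar> \<le> d^2/12 + 2 * \<bar>\<Sum>k<n. s k * t k\<bar>"
    by (simp add: abs_triangle_ineq4[THEN order_trans])
  then show ?thesis using c by (rule order_trans)
qed

lemma cyc_sum:
  fixes h :: "nat \<Rightarrow> real"
  shows "(\<Sum>k<Suc m. h (if k = m then 0 else Suc k)) = (\<Sum>k<Suc m. h k)"
proof -
  have "(\<Sum>k<Suc m. h (if k = m then 0 else Suc k)) = (\<Sum>k<m. h (Suc k)) + h 0"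
    by (simp add: sum.lessThan_Suc)
  also have "\<dots> = (\<Sum>k<Suc m. h k)" by (subst sum.lessThan_Suc_shift) simp
  finally show ?thesis .
qed




theorem mainTheorem7:
  fixes q n :: nat and s :: "nat \<Rightarrow> nat"
  assumes "odd q" and "n \<ge> 2" and "\<And>k. k < n \<Longrightarrow> s k > 0"
  defines "X \<equiv> (\<lambda>\<xi>::nat \<Rightarrow> real. \<Sum>k<n. real (s k) * \<xi> k)"
  shows "\<bar>measure_pmf.expectation (iid_grid q n) (\<lambda>\<xi>. (real_of_int (nint (X \<xi>)))\<^sup>2)
            - (measure_pmf.expectation (iid_grid q n) (\<lambda>\<xi>. (X \<xi>)\<^sup>2) + 1/12)\<bar>
          \<le> (1 + (\<Sum>k<n. real (s k) ^ 3) + real (Min (s ` {..<n})) ^ 2) / (6 * real q ^ 2)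
       \<and> (1 + (\<Sum>k<n. real (s k) ^ 3) + real (Min (s ` {..<n})) ^ 2) / (6 * real q ^ 2)
          \<le> (\<Sum>k<n. real (s k) ^ 3) / (3 * real q ^ 2)"
proof -
  have q0: "real q > 0" using assms(1) by (cases q) auto
  define P where "P = PP q {..<n}"
  define K where "K = (\<lambda>f::nat\<Rightarrow>int. \<Sum>k<n. int (s k) * f k)"
  define c where "c = (\<lambda>f::nat\<Rightarrow>int. cc q (K f))"
  define gg where "gg = (\<lambda>k. gcd (Gcd (s ` ({..<n} - {k}))) q)"
  define d where "d = gcd (Gcd (s ` {..<n})) q"
  define tt where "tt = (\<lambda>k. measure_pmf.expectation P (\<lambda>f. real_of_int (f k) * real_of_int (c f)))"
  define m where "m = Min (s ` {..<n})"
  have finP: "finite (set_pmf P)" unfolding P_def by (rule set_PP_finite) (auto simp: assms(1))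
  have intg: "\<And>F::(nat\<Rightarrow>int)\<Rightarrow>real. integrable (measure_pmf P) F"
    using finP by (rule integrable_measure_pmf_finite)
  have XK: "\<And>f. X ((\<lambda>j. real_of_int j / real q) \<circ> f) = real_of_int (K f) / real q"
    unfolding X_def K_def by (simp add: sum_divide_distrib)
  have E1: "measure_pmf.expectation (iid_grid q n) (\<lambda>\<xi>. (real_of_int (nint (X \<xi>)))\<^sup>2)
      = measure_pmf.expectation P (\<lambda>f. ((real_of_int (K f) - real_of_int (c f)) / real q)^2)"
    unfolding iid_eq[OF assms(1)] P_def[symmetric] by (simp add: XK nint_eq[OF assms(1)] c_def)
  have E2: "measure_pmf.expectation (iid_grid q n) (\<lambda>\<xi>. (X \<xi>)\<^sup>2)
      = measure_pmf.expectation P (\<lambda>f. (real_of_int (K f) / real q)^2)"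
    unfolding iid_eq[OF assms(1)] P_def[symmetric] by (simp add: XK)
  have pt: "((real_of_int (K f) - real_of_int (c f)) / real q)^2 - (real_of_int (K f) / real q)^2
      = (real_of_int (c f)^2 - 2 * (\<Sum>k<n. real (s k) * (real_of_int (f k) * real_of_int (c f)))) / real q^2" for f
  proof -
    have g: "\<And>A C::real. ((A - C) / real q)^2 - (A / real q)^2 = (C^2 - 2*(A*C)) / real q^2"
      using q0 by (simp add: power_divide field_simps power2_eq_square)
    have "real_of_int (K f) * real_of_int (c f) = (\<Sum>k<n. real (s k) * (real_of_int (f k) * real_of_int (c f)))"
      unfolding K_def by (simp add: sum_distrib_right mult.assoc)
    then show ?thesis using g by simp
  qed
  have lin: "measure_pmf.expectation P (\<lambda>f. ((real_of_int (K f) - real_of_int (c f)) / real q)^2)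
      - measure_pmf.expectation P (\<lambda>f. (real_of_int (K f) / real q)^2)
      = (measure_pmf.expectation P (\<lambda>f. real_of_int (c f)^2) - 2 * (\<Sum>k<n. real (s k) * tt k)) / real q^2"
  proof -
    have "measure_pmf.expectation P (\<lambda>f. ((real_of_int (K f) - real_of_int (c f)) / real q)^2)
      - measure_pmf.expectation P (\<lambda>f. (real_of_int (K f) / real q)^2)
      = measure_pmf.expectation P (\<lambda>f. ((real_of_int (K f) - real_of_int (c f)) / real q)^2 - (real_of_int (K f) / real q)^2)"
      by (subst Bochner_Integration.integral_diff[OF intg intg]) (rule refl)
    also have "\<dots> = measure_pmf.expectation P (\<lambda>f. (real_of_int (c f)^2 - 2 * (\<Sum>k<n. real (s k) * (real_of_int (f k) * real_of_int (c f)))) / real q^2)"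
      by (simp only: pt)
    also have "\<dots> = measure_pmf.expectation P (\<lambda>f. real_of_int (c f)^2 - 2 * (\<Sum>k<n. real (s k) * (real_of_int (f k) * real_of_int (c f)))) / real q^2"
      by (rule integral_divide_zero)
    also have "measure_pmf.expectation P (\<lambda>f. real_of_int (c f)^2 - 2 * (\<Sum>k<n. real (s k) * (real_of_int (f k) * real_of_int (c f))))
       = measure_pmf.expectation P (\<lambda>f. real_of_int (c f)^2) - measure_pmf.expectation P (\<lambda>f. 2 * (\<Sum>k<n. real (s k) * (real_of_int (f k) * real_of_int (c f))))"
      by (rule Bochner_Integration.integral_diff) (rule intg)+
    also have "measure_pmf.expectation P (\<lambda>f. 2 * (\<Sum>k<n. real (s k) * (real_of_int (f k) * real_of_int (c f))))
       = 2 * (\<Sum>k<n. real (s k) * tt k)"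
      unfolding tt_def using intg by (simp add: integral_sum)
    finally show ?thesis .
  qed
  have Dv: "measure_pmf.expectation P (\<lambda>f. real_of_int (c f)^2) = (real q ^ 2 - real d ^ 2) / 12"
    unfolding P_def c_def K_def d_def by (rule Dval[OF assms(1)]) simp
  have Tb: "\<bar>tt k\<bar> \<le> real (gg k) ^ 2 / 12" if k: "k < n" for k
  proof -
    have ins: "insert k ({..<n} - {k}) = {..<n}" using k by auto
    have tv: "tt k = (\<Sum>x\<in>II q. real_of_int x * real_of_int (cc (gg k) (int (s k) * x))) / real q"
      unfolding tt_def P_def c_def K_def gg_def
      using Tval[OF assms(1), of "{..<n} - {k}" k s] unfolding ins by simp
    have sb: "\<bar>\<Sum>x\<in>II q. real_of_int x * real_of_int (cc (gg k) (int (s k) * x))\<bar> \<le> real q * (real (gg k) ^ 2 - 1) / 12"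
      by (rule Tbound[OF assms(1)]) (simp add: gg_def)
    have "\<bar>tt k\<bar> = \<bar>\<Sum>x\<in>II q. real_of_int x * real_of_int (cc (gg k) (int (s k) * x))\<bar> / real q"
      unfolding tv using q0 by (simp add: abs_div)
    also have "\<dots> \<le> (real q * (real (gg k) ^ 2 - 1) / 12) / real q" by (rule divide_right_mono[OF sb]) simp
    also have "\<dots> = (real (gg k) ^ 2 - 1) / 12" using q0 by simp
    finally have "\<bar>tt k\<bar> \<le> (real (gg k) ^ 2 - 1) / 12" .
    then show ?thesis by simp
  qed
  have V: "measure_pmf.expectation (iid_grid q n) (\<lambda>\<xi>. (real_of_int (nint (X \<xi>)))\<^sup>2)
            - (measure_pmf.expectation (iid_grid q n) (\<lambda>\<xi>. (X \<xi>)\<^sup>2) + 1/12)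
         = (0 - real d ^ 2 / 12 - 2 * (\<Sum>k<n. real (s k) * tt k)) / real q ^ 2"
  proof -
    have "measure_pmf.expectation (iid_grid q n) (\<lambda>\<xi>. (real_of_int (nint (X \<xi>)))\<^sup>2)
            - (measure_pmf.expectation (iid_grid q n) (\<lambda>\<xi>. (X \<xi>)\<^sup>2) + 1/12)
        = ((real q ^ 2 - real d ^ 2) / 12 - 2 * (\<Sum>k<n. real (s k) * tt k)) / real q^2 - 1/12"
      using lin Dv unfolding E1 E2 by simp
    then show ?thesis using q0 by (simp add: field_simps)
  qed
  have "s 0 \<in> s ` {..<n}" using assms(2) by simp
  then have ne: "s ` {..<n} \<noteq> {}" by blast
  obtain k0 where k0: "k0 < n" "s k0 = m" using Min_in[OF _ ne] unfolding m_def by auto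
  have dm: "d \<le> m"
  proof -
    have "d dvd Gcd (s ` {..<n})" unfolding d_def by simp
    also have "Gcd (s ` {..<n}) dvd s k0" using k0(1) by (intro Gcd_dvd) auto
    finally show ?thesis using assms(3)[OF k0(1)] k0(2) by (simp add: dvd_imp_le)
  qed
  obtain n' where n': "n = Suc n'" using assms(2) by (cases n) auto
  define \<sigma> where "\<sigma> = (\<lambda>k. if k = n' then 0 else Suc k)"
  have \<sigma>: "\<sigma> k < n" "\<sigma> k \<noteq> k" if "k < n" for k
    using that assms(2) n' unfolding \<sigma>_def by auto
  have gs: "gg k \<le> s (\<sigma> k)" if k: "k < n" for k
  proof -
    have "gg k dvd Gcd (s ` ({..<n} - {k}))" unfolding gg_def by simp
    also have "Gcd (s ` ({..<n} - {k})) dvd s (\<sigma> k)" using \<sigma>[OF k] by (intro Gcd_dvd) auto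
    finally show ?thesis using assms(3)[OF \<sigma>(1)[OF k]] by (simp add: dvd_imp_le)
  qed
  have sum3: "(\<Sum>k<n. real (gg k) ^ 3) \<le> (\<Sum>k<n. real (s k) ^ 3)"
  proof -
    have "(\<Sum>k<n. real (gg k) ^ 3) \<le> (\<Sum>k<n. real (s (\<sigma> k)) ^ 3)"
      using gs by (intro sum_mono power_mono) auto
    also have "\<dots> = (\<Sum>k<n. real (s k) ^ 3)"
      unfolding n' \<sigma>_def using cyc_sum[of "\<lambda>k. real (s k) ^ 3" n'] by simp
    finally show ?thesis .
  qed
  have num: "\<bar>0 - real d ^ 2 / 12 - 2 * (\<Sum>k<n. real (s k) * tt k)\<bar> \<le> (1 + (\<Sum>k<n. real (s k) ^ 3) + real m ^ 2) / 6"
    by (rule final_bound[where g="\<lambda>k. real (gg k)"]) (use dm Tb sum3 in auto)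
  have part1: "\<bar>measure_pmf.expectation (iid_grid q n) (\<lambda>\<xi>. (real_of_int (nint (X \<xi>)))\<^sup>2)
            - (measure_pmf.expectation (iid_grid q n) (\<lambda>\<xi>. (X \<xi>)\<^sup>2) + 1/12)\<bar>
          \<le> (1 + (\<Sum>k<n. real (s k) ^ 3) + real m ^ 2) / (6 * real q ^ 2)"
  proof -
    have "\<bar>(0 - real d ^ 2 / 12 - 2 * (\<Sum>k<n. real (s k) * tt k)) / real q ^ 2\<bar>
        = \<bar>0 - real d ^ 2 / 12 - 2 * (\<Sum>k<n. real (s k) * tt k)\<bar> / real q ^ 2" by (simp add: abs_div)
    also have "\<dots> \<le> (1 + (\<Sum>k<n. real (s k) ^ 3) + real m ^ 2) / 6 / real q ^ 2"
      by (rule divide_right_mono[OF num]) simp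
    finally show ?thesis unfolding V by simp
  qed
  have part2: "1 + real m ^ 2 \<le> (\<Sum>k<n. real (s k) ^ 3)"
  proof -
    let ?k1 = "\<sigma> k0"
    have "(\<Sum>k\<in>{k0, ?k1}. real (s k) ^ 3) \<le> (\<Sum>k<n. real (s k) ^ 3)"
      using k0(1) \<sigma>[OF k0(1)] by (intro sum_mono2) auto
    moreover have "(\<Sum>k\<in>{k0, ?k1}. real (s k) ^ 3) = real m ^ 3 + real (s ?k1) ^ 3"
      using \<sigma>(2)[OF k0(1)] k0(2) by simp
    moreover have "real m ^ 2 \<le> real m ^ 3"
    proof -
      have "1 \<le> real m" using assms(3)[OF k0(1)] k0(2) by simp
      then show ?thesis by (simp add: power_increasing)
    qed
    moreover have "1 \<le> real (s ?k1) ^ 3" using assms(3)[OF \<sigma>(1)[OF k0(1)]] by simp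
    ultimately show ?thesis by linarith
  qed
  have "(1 + (\<Sum>k<n. real (s k) ^ 3) + real m ^ 2) / (6 * real q ^ 2) \<le> (\<Sum>k<n. real (s k) ^ 3) / (3 * real q ^ 2)"
  proof -
    have "1 + (\<Sum>k<n. real (s k) ^ 3) + real m ^ 2 \<le> 2 * (\<Sum>k<n. real (s k) ^ 3)" using part2 by linarith
    then have "(1 + (\<Sum>k<n. real (s k) ^ 3) + real m ^ 2) / (6 * real q ^ 2) \<le> (2 * (\<Sum>k<n. real (s k) ^ 3)) / (6 * real q ^ 2)"
      by (rule divide_right_mono) simp
    also have "\<dots> = (\<Sum>k<n. real (s k) ^ 3) / (3 * real q ^ 2)" by simp
    finally show ?thesis .
  qed
  then show ?thesis using part1 unfolding m_def by simp
qed


end
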